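(* Let $G$ be a graph, $k\in\mathbb N$, and let $\mathcal F$ be a set of finite stars in $\vec S_k(G)$ all of which have finite interior. Let $\sigma\subseteq\vec S_k(G)$ be a star of left-tight separations, and let $X\subseteq\mathrm{int}(\sigma)$ with $|X|<k$. Suppose that either $X$ is a critical vertex set of $\mathrm{torso}(\sigma)$, or infinitely many separations $(A,B)\in\sigma$ satisfy $A\cap B=X$. Then there is a non-principal $\mathcal F$-tangle $\tau$ of $S_k(G)$ with $\sigma\subseteq\tau$.
   Context: Graphs may be infinite. A separation of $G$ is a set $\{A,B\}$ with $A,B\subseteq V(G)$, $A\cup B=V(G)$ and no edge of $G$ between $A\setminus B$ and $B\setminus A$; its order is $|A\cap B|$. $S_k(G)$ is the set of separations of order $<k$ and $\vec S_k(G)$ the set of their orientations $(A,B)$, $(B,A)$. Order: $(A,B)\le(C,D)$ iff $A\subseteq C$ and $B\supseteq D$. $(A,B)$ is left-tight if some component of $G[A\setminus B]$ has neighbourhood in $G$ equal to $A\cap B$. An orientation of $S_k(G)$ is a set containing exactly one orientation of each element; consistent if there are no distinct $\{A,B\},\{C,D\}\in S_k(G)$ with $(A,B)<(C,D)$, $(B,A)\in O$, $(C,D)\in O$; principal if for every set $Y$ of fewer than $k$ vertices it contains $(V(G)\setminus V(K),V(K)\cup Y)$ for some component $K$ of $G-Y$, and non-principal otherwise. A star is a set $\sigma$ of oriented finite-order separations, not containing $(V(G),V(G))$, with $(A,B)\le(D,C)$ for distinct $(A,B),(C,D)\in\sigma$; its interior is $\mathrm{int}(\sigma)=\bigcap_{(A,B)\in\sigma}B$;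 $\mathrm{torso}(\sigma)$ is obtained from $G[\mathrm{int}(\sigma)]$ by adding an edge $uv$ whenever distinct $u,v\in\mathrm{int}(\sigma)$ lie together in $A\cap B$ for some $(A,B)\in\sigma$. An $\mathcal F$-tangle of $S_k(G)$ is a consistent orientation of $S_k(G)$ having no element of $\mathcal F$ as a subset. A critical vertex set of a graph $H$ is a finite $X\subseteq V(H)$ such that infinitely many components $K$ of $H-X$ satisfy $N_H(K)=X$. *)

theory Defs
  imports Main
begin

definition graph :: "'a set \<Rightarrow> ('a \<Rightarrow> 'a \<Rightarrow> bool) \<Rightarrow> bool" where
  "graph V E \<longleftrightarrow> (\<forall>u v. E u v \<longrightarrow> u \<in> V \<and> v \<in> V \<and> u \<noteq> v \<and> E v u)"

definition component_in :: "'a set \<Rightarrow> ('a \<Rightarrow> 'a \<Rightarrow> bool) \<Rightarrow> 'a set \<Rightarrow> 'a set \<Rightarrow> bool" where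
  "component_in V E S K \<longleftrightarrow>
     (\<exists>x \<in> S \<inter> V. K = {y. (\<lambda>u v. E u v \<and> u \<in> S \<inter> V \<and> v \<in> S \<inter> V)\<^sup>*\<^sup>* x y})"

definition nbhd :: "'a set \<Rightarrow> ('a \<Rightarrow> 'a \<Rightarrow> bool) \<Rightarrow> 'a set \<Rightarrow> 'a set" where
  "nbhd V E C = {v \<in> V - C. \<exists>u \<in> C. E u v}"

text \<open>Oriented separations (A,B); the unoriented separation {A,B} corresponds to
the two orientations (A,B), (B,A).\<close>
definition is_sep :: "'a set \<Rightarrow> ('a \<Rightarrow> 'a \<Rightarrow> bool) \<Rightarrow> 'a set \<times> 'a set \<Rightarrow> bool" where
  "is_sep V E s \<longleftrightarrow> (case s of (A, B) \<Rightarrow>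
     A \<subseteq> V \<and> B \<subseteq> V \<and> A \<union> B = V \<and> (\<forall>u \<in> A - B. \<forall>v \<in> B - A. \<not> E u v))"

definition finite_order_seps :: "'a set \<Rightarrow> ('a \<Rightarrow> 'a \<Rightarrow> bool) \<Rightarrow> ('a set \<times> 'a set) set" where
  "finite_order_seps V E = {(A, B). is_sep V E (A, B) \<and> finite (A \<inter> B)}"

definition vS :: "'a set \<Rightarrow> ('a \<Rightarrow> 'a \<Rightarrow> bool) \<Rightarrow> nat \<Rightarrow> ('a set \<times> 'a set) set" where
  "vS V E k = {(A, B). is_sep V E (A, B) \<and> finite (A \<inter> B) \<and> card (A \<inter> B) < k}"

definition sep_le :: "'a set \<times> 'a set \<Rightarrow> 'a set \<times> 'a set \<Rightarrow> bool" where
  "sep_le s t \<longleftrightarrow> fst s \<subseteq> fst t \<and> snd t \<subseteq> snd s"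

definition sep_less :: "'a set \<times> 'a set \<Rightarrow> 'a set \<times> 'a set \<Rightarrow> bool" where
  "sep_less s t \<longleftrightarrow> sep_le s t \<and> s \<noteq> t"

definition flip :: "'a set \<times> 'a set \<Rightarrow> 'a set \<times> 'a set" where
  "flip s = (snd s, fst s)"

definition left_tight :: "'a set \<Rightarrow> ('a \<Rightarrow> 'a \<Rightarrow> bool) \<Rightarrow> 'a set \<times> 'a set \<Rightarrow> bool" where
  "left_tight V E s \<longleftrightarrow>
     (\<exists>C. component_in V E (fst s - snd s) C \<and> nbhd V E C = fst s \<inter> snd s)"

definition is_orientation :: "'a set \<Rightarrow> ('a \<Rightarrow> 'a \<Rightarrow> bool) \<Rightarrow> nat \<Rightarrow> ('a set \<times> 'a set) set \<Rightarrow> bool" where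
  "is_orientation V E k Or \<longleftrightarrow> Or \<subseteq> vS V E k \<and>
     (\<forall>s \<in> vS V E k. s \<in> Or \<or> flip s \<in> Or) \<and>
     (\<forall>s \<in> Or. flip s \<in> Or \<longrightarrow> flip s = s)"

definition consistent :: "('a set \<times> 'a set) set \<Rightarrow> bool" where
  "consistent Or \<longleftrightarrow> \<not> (\<exists>s t. s \<noteq> t \<and> s \<noteq> flip t \<and> sep_less s t \<and> flip s \<in> Or \<and> t \<in> Or)"

definition principal :: "'a set \<Rightarrow> ('a \<Rightarrow> 'a \<Rightarrow> bool) \<Rightarrow> nat \<Rightarrow> ('a set \<times> 'a set) set \<Rightarrow> bool" where
  "principal V E k Or \<longleftrightarrow>
     (\<forall>Y. Y \<subseteq> V \<and> finite Y \<and> card Y < k \<longrightarrow>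
        (\<exists>K. component_in V E (V - Y) K \<and> (V - K, K \<union> Y) \<in> Or))"

definition is_star :: "'a set \<Rightarrow> ('a \<Rightarrow> 'a \<Rightarrow> bool) \<Rightarrow> ('a set \<times> 'a set) set \<Rightarrow> bool" where
  "is_star V E \<sigma> \<longleftrightarrow> \<sigma> \<subseteq> finite_order_seps V E \<and> (V, V) \<notin> \<sigma> \<and>
     (\<forall>s \<in> \<sigma>. \<forall>t \<in> \<sigma>. s \<noteq> t \<longrightarrow> sep_le s (flip t))"

definition interior :: "'a set \<Rightarrow> ('a set \<times> 'a set) set \<Rightarrow> 'a set" where
  "interior V \<sigma> = V \<inter> (\<Inter>s \<in> \<sigma>. snd s)"

text \<open>Edge relation of torso(sigma), whose vertex set is interior V sigma.\<close>
definition torso_edges :: "'a set \<Rightarrow> ('a \<Rightarrow> 'a \<Rightarrow> bool) \<Rightarrow> ('a set \<times> 'a set) set \<Rightarrow> 'a \<Rightarrow> 'a \<Rightarrow> bool" where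
  "torso_edges V E \<sigma> u v \<longleftrightarrow> u \<in> interior V \<sigma> \<and> v \<in> interior V \<sigma> \<and>
     (E u v \<or> (u \<noteq> v \<and> (\<exists>s \<in> \<sigma>. u \<in> fst s \<inter> snd s \<and> v \<in> fst s \<inter> snd s)))"

definition critical :: "'a set \<Rightarrow> ('a \<Rightarrow> 'a \<Rightarrow> bool) \<Rightarrow> 'a set \<Rightarrow> bool" where
  "critical W H X \<longleftrightarrow> finite X \<and> X \<subseteq> W \<and>
     infinite {K. component_in W H (W - X) K \<and> nbhd W H K = X}"

definition F_tangle :: "'a set \<Rightarrow> ('a \<Rightarrow> 'a \<Rightarrow> bool) \<Rightarrow> nat \<Rightarrow> ('a set \<times> 'a set) set set
                       \<Rightarrow> ('a set \<times> 'a set) set \<Rightarrow> bool" where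
  "F_tangle V E k \<F> Or \<longleftrightarrow> is_orientation V E k Or \<and> consistent Or \<and> (\<forall>\<rho> \<in> \<F>. \<not> \<rho> \<subseteq> Or)"

end

theory Submission
  imports Defs
begin


definition fip_good :: "'b set \<Rightarrow> 'b set set \<Rightarrow> bool" where
  "fip_good C M \<longleftrightarrow> (\<forall>F. F \<subseteq> M \<and> finite F \<longrightarrow> infinite (C \<inter> \<Inter>F))"

lemma not_good_insert:
  assumes "fip_good C M" "\<not> fip_good C (insert S M)"
  shows "\<exists>F. F \<subseteq> M \<and> finite F \<and> finite (C \<inter> \<Inter>F \<inter> S)"
proof -
  from assms(2) obtain F where F: "F \<subseteq> insert S M" "finite F" "finite (C \<inter> \<Inter>F)"
    unfolding fip_good_def by blast
  have "C \<inter> \<Inter>(F - {S}) \<inter> S \<subseteq> C \<inter> \<Inter>F" by blast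
  then have "finite (C \<inter> \<Inter>(F - {S}) \<inter> S)" using F(3) finite_subset by blast
  moreover have "F - {S} \<subseteq> M" using F by blast
  ultimately show ?thesis using F(2) by blast
qed

lemma free_ultra:
  fixes C :: "'b set"
  assumes inf: "infinite C"
  obtains P where "\<And>S. P S \<Longrightarrow> infinite S" "\<And>S T. P S \<Longrightarrow> P T \<Longrightarrow> P (S \<inter> T)"
    "\<And>S. S \<subseteq> C \<Longrightarrow> P S \<or> P (C - S)" "\<And>S T. P S \<Longrightarrow> S \<subseteq> T \<Longrightarrow> P T"
proof -
  let ?A = "{M. fip_good C M}"
  have "\<exists>M\<in>?A. \<forall>X\<in>?A. M \<subseteq> X \<longrightarrow> X = M"
  proof (rule subset_Zorn_nonempty)
    have "fip_good C {}" using inf unfolding fip_good_def by auto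
    then show "?A \<noteq> {}" by blast
  next
    fix Ch assume ne: "Ch \<noteq> {}" and ch: "subset.chain ?A Ch"
    show "\<Union>Ch \<in> ?A" unfolding mem_Collect_eq fip_good_def
    proof (intro allI impI)
      fix F assume F: "F \<subseteq> \<Union>Ch \<and> finite F"
      then obtain B where "B \<in> Ch" "F \<subseteq> B"
        using finite_subset_Union_chain[OF _ _ ne ch] by blast
      moreover have "B \<in> ?A" using ch \<open>B \<in> Ch\<close> unfolding subset.chain_def by blast
      ultimately show "infinite (C \<inter> \<Inter>F)" using F unfolding fip_good_def by blast
    qed
  qed
  then obtain M where M: "fip_good C M" and max: "\<And>X. fip_good C X \<Longrightarrow> M \<subseteq> X \<Longrightarrow> X = M"
    by blast
  define P where "P S \<longleftrightarrow> (\<exists>F. F \<subseteq> M \<and> finite F \<and> C \<inter> \<Inter>F \<subseteq> S)" for S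
  show ?thesis
  proof
    fix S assume "P S"
    then obtain F where "F \<subseteq> M" "finite F" "C \<inter> \<Inter>F \<subseteq> S" unfolding P_def by blast
    then show "infinite S" using M unfolding fip_good_def using finite_subset by blast
  next
    fix S T assume "P S" "P T"
    then obtain F1 F2 where "F1 \<subseteq> M" "finite F1" "C \<inter> \<Inter>F1 \<subseteq> S"
      "F2 \<subseteq> M" "finite F2" "C \<inter> \<Inter>F2 \<subseteq> T" unfolding P_def by blast
    then show "P (S \<inter> T)" unfolding P_def
      by (intro exI[of _ "F1 \<union> F2"]) auto
  next
    fix S T assume "P S" "S \<subseteq> T" then show "P T" unfolding P_def by blast
  next
    fix S assume S: "S \<subseteq> C"
    show "P S \<or> P (C - S)"
    proof (rule ccontr)
      assume nn: "\<not> (P S \<or> P (C - S))"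
      have "\<not> fip_good C (insert S M)"
      proof
        assume "fip_good C (insert S M)"
        then have "insert S M = M" using max by blast
        then have "P S" unfolding P_def by (intro exI[of _ "{S}"]) auto
        then show False using nn by blast
      qed
      then obtain F1 where F1: "F1 \<subseteq> M" "finite F1" "finite (C \<inter> \<Inter>F1 \<inter> S)"
        using not_good_insert[OF M] by blast
      have "\<not> fip_good C (insert (C - S) M)"
      proof
        assume "fip_good C (insert (C - S) M)"
        then have "insert (C - S) M = M" using max by blast
        then have "P (C - S)" unfolding P_def by (intro exI[of _ "{C - S}"]) auto
        then show False using nn by blast
      qed
      then obtain F2 where F2: "F2 \<subseteq> M" "finite F2" "finite (C \<inter> \<Inter>F2 \<inter> (C - S))"
        using not_good_insert[OF M] by blast
      have "C \<inter> \<Inter>(F1 \<union> F2) \<subseteq> (C \<inter> \<Inter>F1 \<inter> S) \<union> (C \<inter> \<Inter>F2 \<inter> (C - S))" by blast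
      then have "finite (C \<inter> \<Inter>(F1 \<union> F2))" using F1(3) F2(3) finite_subset by blast
      moreover have "F1 \<union> F2 \<subseteq> M" "finite (F1 \<union> F2)" using F1 F2 by auto
      ultimately show False using M unfolding fip_good_def by blast
    qed
  qed
qed



lemma graph_sym: "graph V E \<Longrightarrow> E u v \<Longrightarrow> E v u"
  unfolding graph_def by blast

lemma comp_props:
  assumes "component_in V E S K"
  shows "K \<subseteq> S \<inter> V" "K \<noteq> {}"
proof -
  from assms obtain x where x: "x \<in> S \<inter> V"
    and K: "K = {y. (\<lambda>u v. E u v \<and> u \<in> S \<inter> V \<and> v \<in> S \<inter> V)\<^sup>*\<^sup>* x y}"
    unfolding component_in_def by blast
  show "K \<noteq> {}" using K by auto
  show "K \<subseteq> S \<inter> V"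
  proof
    fix y assume "y \<in> K"
    then have "(\<lambda>u v. E u v \<and> u \<in> S \<inter> V \<and> v \<in> S \<inter> V)\<^sup>*\<^sup>* x y" using K by simp
    then show "y \<in> S \<inter> V" using x by (cases rule: rtranclp.cases) auto
  qed
qed

lemma rtranclp_sym:
  assumes "\<And>u v. r u v \<Longrightarrow> r v u" "r\<^sup>*\<^sup>* x y"
  shows "r\<^sup>*\<^sup>* y x"
  using assms(2)
proof (induction rule: rtranclp_induct)
  case base then show ?case by simp
next
  case (step y z)
  then show ?case using assms(1) by (meson converse_rtranclp_into_rtranclp)
qed

lemma comp_eq:
  assumes G: "graph V E" and K1: "component_in V E S K1" and K2: "component_in V E S K2"
    and y: "y \<in> K1" "y \<in> K2"
  shows "K1 = K2"
proof -
  let ?R = "\<lambda>u v. E u v \<and> u \<in> S \<inter> V \<and> v \<in> S \<inter> V"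
  have sym: "\<And>u v. ?R u v \<Longrightarrow> ?R v u" using graph_sym[OF G] by blast
  from K1 obtain x1 where K1': "K1 = {y. ?R\<^sup>*\<^sup>* x1 y}" unfolding component_in_def by blast
  from K2 obtain x2 where K2': "K2 = {y. ?R\<^sup>*\<^sup>* x2 y}" unfolding component_in_def by blast
  have a: "?R\<^sup>*\<^sup>* x1 y" "?R\<^sup>*\<^sup>* x2 y" using y K1' K2' by auto
  have "?R\<^sup>*\<^sup>* x1 x2" using a(1) rtranclp_sym[OF sym a(2)] by simp
  moreover have "?R\<^sup>*\<^sup>* x2 x1" using a(2) rtranclp_sym[OF sym a(1)] by simp
  ultimately have "\<And>z. ?R\<^sup>*\<^sup>* x1 z = ?R\<^sup>*\<^sup>* x2 z"
    by (meson rtranclp_trans)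
  then show ?thesis unfolding K1' K2' by blast
qed

lemma is_sep_flip: "graph V E \<Longrightarrow> is_sep V E (A, B) \<Longrightarrow> is_sep V E (B, A)"
  unfolding is_sep_def using graph_sym by fastforce

lemma comp_side_aux:
  assumes G: "graph V E" and sep: "is_sep V E (A, B)"
    and x: "x \<in> A - B"
    and K: "K = {y. (\<lambda>u v. E u v \<and> u \<in> S \<inter> V \<and> v \<in> S \<inter> V)\<^sup>*\<^sup>* x y}"
    and dis: "K \<inter> (A \<inter> B) = {}"
  shows "K \<subseteq> A - B"
proof
  fix y assume "y \<in> K"
  then have "(\<lambda>u v. E u v \<and> u \<in> S \<inter> V \<and> v \<in> S \<inter> V)\<^sup>*\<^sup>* x y" using K by simp
  then show "y \<in> A - B"
  proof (induction rule: rtranclp_induct)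
    case base then show ?case using x by simp
  next
    case (step y z)
    then have "z \<in> K" using K by (auto intro: rtranclp.rtrancl_into_rtrancl)
    then have "z \<notin> A \<inter> B" using dis by blast
    moreover have "z \<in> A \<union> B" using step sep unfolding is_sep_def by auto
    moreover have "\<not> (z \<in> B - A)" using step sep unfolding is_sep_def by auto
    ultimately show ?case by blast
  qed
qed

lemma comp_side:
  assumes G: "graph V E" and K: "component_in V E S K" and sep: "is_sep V E (A, B)"
    and dis: "K \<inter> (A \<inter> B) = {}"
  shows "K \<subseteq> A - B \<or> K \<subseteq> B - A"
proof -
  from K obtain x where x: "x \<in> S \<inter> V"
    and K': "K = {y. (\<lambda>u v. E u v \<and> u \<in> S \<inter> V \<and> v \<in> S \<inter> V)\<^sup>*\<^sup>* x y}"
    unfolding component_in_def by blast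
  have "x \<in> K" using K' by simp
  then have "x \<notin> A \<inter> B" using dis by blast
  moreover have "x \<in> A \<union> B" using x sep unfolding is_sep_def by auto
  ultimately consider "x \<in> A - B" | "x \<in> B - A" by blast
  then show ?thesis
  proof cases
    case 1 then show ?thesis using comp_side_aux[OF G sep 1 K' dis] by blast
  next
    case 2
    have "K \<inter> (B \<inter> A) = {}" using dis by blast
    then show ?thesis using comp_side_aux[OF G is_sep_flip[OF G sep] 2 K'] by blast
  qed
qed

lemma finite_meeting:
  assumes G: "graph V E" and comps: "\<forall>C\<in>\<C>. component_in V E S C" and W: "finite W"
  shows "finite {C \<in> \<C>. C \<inter> W \<noteq> {}}"
proof -
  let ?T = "{C \<in> \<C>. C \<inter> W \<noteq> {}}"
  define f where "f C = (SOME x. x \<in> C \<inter> W)" for C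
  have fin: "f C \<in> C \<inter> W" if "C \<in> ?T" for C
    using that unfolding f_def some_in_eq by simp
  have "inj_on f ?T"
  proof (rule inj_onI)
    fix C D assume "C \<in> ?T" "D \<in> ?T" "f C = f D"
    then have "f C \<in> C" "f C \<in> D" "component_in V E S C" "component_in V E S D"
      using fin[of C] fin[of D] comps by auto
    then show "C = D" using comp_eq[OF G] by blast
  qed
  moreover have "f ` ?T \<subseteq> W" using fin by blast
  moreover have "finite (f ` ?T)" using W calculation(2) finite_subset by blast
  ultimately show ?thesis using finite_imageD by blast
qed


lemma core:
  assumes G: "graph V E"
    and F: "\<forall>\<rho> \<in> \<F>. finite \<rho> \<and> finite (interior V \<rho>)"
    and sig: "\<sigma> \<subseteq> vS V E k"
    and X: "X \<subseteq> V" "finite X" "card X < k"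
    and Cinf: "infinite \<C>" and comps: "\<forall>C\<in>\<C>. component_in V E (V - X) C"
    and cof: "\<forall>s\<in>\<sigma>. finite {C\<in>\<C>. \<not> C \<subseteq> snd s - fst s}"
  shows "\<exists>\<tau>. F_tangle V E k \<F> \<tau> \<and> \<not> principal V E k \<tau> \<and> \<sigma> \<subseteq> \<tau>"
proof -
  obtain P where u1: "\<And>S. P S \<Longrightarrow> infinite S" and u2: "\<And>S T. P S \<Longrightarrow> P T \<Longrightarrow> P (S \<inter> T)"
    and u3: "\<And>S. S \<subseteq> \<C> \<Longrightarrow> P S \<or> P (\<C> - S)" and u4: "\<And>S T. P S \<Longrightarrow> S \<subseteq> T \<Longrightarrow> P T"
    by (rule free_ultra[OF Cinf]) blast
  have P_cof: "P T" if "T \<subseteq> \<C>" "P S" "finite (S - T)" for S T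
  proof -
    have "P T \<or> P (\<C> - T)" using u3 that(1) by blast
    moreover have "\<not> P (\<C> - T)"
    proof
      assume "P (\<C> - T)"
      then have "P (S \<inter> (\<C> - T))" using u2 that(2) by blast
      then have "infinite (S \<inter> (\<C> - T))" using u1 by blast
      moreover have "S \<inter> (\<C> - T) \<subseteq> S - T" by blast
      ultimately show False using that(3) finite_subset by blast
    qed
    ultimately show ?thesis by blast
  qed
  have P_C: "P \<C>" using u3[of "{}"] u1[of "{}"] by auto
  have cne: "C \<noteq> {}" "C \<subseteq> V" if "C \<in> \<C>" for C
    using comp_props[of V E "V - X" C] comps that by auto
  have disj: False if "P {C\<in>\<C>. C \<subseteq> S1}" "P {C\<in>\<C>. C \<subseteq> S2}" "S1 \<inter> S2 = {}" for S1 S2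
  proof -
    have "P ({C\<in>\<C>. C \<subseteq> S1} \<inter> {C\<in>\<C>. C \<subseteq> S2})" using u2 that(1,2) by blast
    moreover have "{C\<in>\<C>. C \<subseteq> S1} \<inter> {C\<in>\<C>. C \<subseteq> S2} = {}" using cne that(3) by blast
    ultimately show False using u1 by fastforce
  qed
  have bad: "finite {C\<in>\<C>. \<not> C \<subseteq> A - B \<and> \<not> C \<subseteq> B - A}" if "(A, B) \<in> vS V E k" for A B
  proof -
    have sep: "is_sep V E (A, B)" "finite (A \<inter> B)" using that unfolding vS_def by auto
    have "{C\<in>\<C>. \<not> C \<subseteq> A - B \<and> \<not> C \<subseteq> B - A} \<subseteq> {C\<in>\<C>. C \<inter> (A \<inter> B) \<noteq> {}}"
    proof
      fix C assume C: "C \<in> {C\<in>\<C>. \<not> C \<subseteq> A - B \<and> \<not> C \<subseteq> B - A}"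
      then have "component_in V E (V - X) C" using comps by blast
      then have "C \<inter> (A \<inter> B) \<noteq> {}" using comp_side[OF G _ sep(1)] C by blast
      then show "C \<in> {C\<in>\<C>. C \<inter> (A \<inter> B) \<noteq> {}}" using C by blast
    qed
    moreover have "finite {C\<in>\<C>. C \<inter> (A \<inter> B) \<noteq> {}}"
      using finite_meeting[OF G comps sep(2)] .
    ultimately show ?thesis using finite_subset by blast
  qed
  define \<tau> where "\<tau> = {s \<in> vS V E k. P {C\<in>\<C>. C \<subseteq> snd s - fst s}}"
  have orient: "is_orientation V E k \<tau>"
    unfolding is_orientation_def
  proof (intro conjI ballI impI)
    show "\<tau> \<subseteq> vS V E k" unfolding \<tau>_def by blast
  next
    fix s assume s: "s \<in> vS V E k"
    obtain A B where AB: "s = (A, B)" by fastforce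
    have s': "is_sep V E (A, B)" "finite (A \<inter> B)" "card (A \<inter> B) < k"
      using s unfolding AB vS_def by auto
    have "is_sep V E (B, A)" using is_sep_flip[OF G s'(1)] .
    moreover have "B \<inter> A = A \<inter> B" by blast
    ultimately have fl: "(B, A) \<in> vS V E k" using s' unfolding vS_def by simp
    have "P {C\<in>\<C>. C \<subseteq> B - A} \<or> P (\<C> - {C\<in>\<C>. C \<subseteq> B - A})" using u3[of "{C\<in>\<C>. C \<subseteq> B - A}"] by blast
    then show "s \<in> \<tau> \<or> flip s \<in> \<tau>"
    proof
      assume "P {C\<in>\<C>. C \<subseteq> B - A}"
      then show ?thesis using s unfolding \<tau>_def AB by auto
    next
      assume h: "P (\<C> - {C\<in>\<C>. C \<subseteq> B - A})"
      have "(\<C> - {C\<in>\<C>. C \<subseteq> B - A}) - {C\<in>\<C>. C \<subseteq> A - B}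
          \<subseteq> {C\<in>\<C>. \<not> C \<subseteq> A - B \<and> \<not> C \<subseteq> B - A}" by blast
      then have "finite ((\<C> - {C\<in>\<C>. C \<subseteq> B - A}) - {C\<in>\<C>. C \<subseteq> A - B})"
        using bad[OF s[unfolded AB]] finite_subset by blast
      moreover have "{C\<in>\<C>. C \<subseteq> A - B} \<subseteq> \<C>" by blast
      ultimately have "P {C\<in>\<C>. C \<subseteq> A - B}" using P_cof[OF _ h] by simp
      then show ?thesis using fl unfolding \<tau>_def AB flip_def by auto
    qed
  next
    fix s assume "s \<in> \<tau>" "flip s \<in> \<tau>"
    then have "P {C\<in>\<C>. C \<subseteq> snd s - fst s}" "P {C\<in>\<C>. C \<subseteq> fst s - snd s}"
      unfolding \<tau>_def flip_def by auto
    from disj[OF this] have False by blast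
    then show "flip s = s" ..
  qed
  have cons: "consistent \<tau>"
    unfolding consistent_def
  proof (intro notI, elim exE conjE)
    fix s t assume lt: "sep_less s t" and fs: "flip s \<in> \<tau>" and t: "t \<in> \<tau>"
    have "P {C\<in>\<C>. C \<subseteq> fst s - snd s}" using fs unfolding \<tau>_def flip_def by auto
    moreover have "P {C\<in>\<C>. C \<subseteq> snd t - fst t}" using t unfolding \<tau>_def by auto
    moreover have "(fst s - snd s) \<inter> (snd t - fst t) = {}"
      using lt unfolding sep_less_def sep_le_def by blast
    ultimately show False using disj by metis
  qed
  have inter: "P {C\<in>\<C>. \<forall>s\<in>R. C \<subseteq> snd s - fst s}" if "finite R" "R \<subseteq> \<tau>" for R
    using that
  proof (induction R rule: finite_induct)
    case empty then show ?case using P_C by simp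
  next
    case (insert x R)
    then have "P {C\<in>\<C>. \<forall>s\<in>R. C \<subseteq> snd s - fst s}" "P {C\<in>\<C>. C \<subseteq> snd x - fst x}"
      unfolding \<tau>_def by auto
    then have "P ({C\<in>\<C>. \<forall>s\<in>R. C \<subseteq> snd s - fst s} \<inter> {C\<in>\<C>. C \<subseteq> snd x - fst x})"
      using u2 by blast
    moreover have "{C\<in>\<C>. \<forall>s\<in>R. C \<subseteq> snd s - fst s} \<inter> {C\<in>\<C>. C \<subseteq> snd x - fst x}
       = {C\<in>\<C>. \<forall>s\<in>insert x R. C \<subseteq> snd s - fst s}" by auto
    ultimately show ?case by simp
  qed
  have avoid: "\<forall>\<rho>\<in>\<F>. \<not> \<rho> \<subseteq> \<tau>"
  proof (intro ballI notI)
    fix \<rho> assume r: "\<rho> \<in> \<F>" "\<rho> \<subseteq> \<tau>"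
    have "P {C\<in>\<C>. \<forall>s\<in>\<rho>. C \<subseteq> snd s - fst s}" using inter r F by blast
    then have "infinite {C\<in>\<C>. \<forall>s\<in>\<rho>. C \<subseteq> snd s - fst s}" using u1 by blast
    moreover have "{C\<in>\<C>. \<forall>s\<in>\<rho>. C \<subseteq> snd s - fst s} \<subseteq> {C\<in>\<C>. C \<inter> interior V \<rho> \<noteq> {}}"
    proof
      fix C assume C: "C \<in> {C\<in>\<C>. \<forall>s\<in>\<rho>. C \<subseteq> snd s - fst s}"
      then have "C \<subseteq> interior V \<rho>" using cne unfolding interior_def by blast
      then show "C \<in> {C\<in>\<C>. C \<inter> interior V \<rho> \<noteq> {}}" using C cne by blast
    qed
    moreover have "finite {C\<in>\<C>. C \<inter> interior V \<rho> \<noteq> {}}"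
      using finite_meeting[OF G comps] F r by blast
    ultimately show False using finite_subset by blast
  qed
  have sigt: "\<sigma> \<subseteq> \<tau>"
  proof
    fix s assume s: "s \<in> \<sigma>"
    have "\<C> - {C\<in>\<C>. C \<subseteq> snd s - fst s} = {C\<in>\<C>. \<not> C \<subseteq> snd s - fst s}" by blast
    then have "P {C\<in>\<C>. C \<subseteq> snd s - fst s}"
      using P_cof[OF _ P_C, of "{C\<in>\<C>. C \<subseteq> snd s - fst s}"] cof s by auto
    then show "s \<in> \<tau>" using s sig unfolding \<tau>_def by blast
  qed
  have np: "\<not> principal V E k \<tau>"
    unfolding principal_def
  proof
    assume pr: "\<forall>Y. Y \<subseteq> V \<and> finite Y \<and> card Y < k \<longrightarrow>
        (\<exists>K. component_in V E (V - Y) K \<and> (V - K, K \<union> Y) \<in> \<tau>)"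
    then obtain K where K: "component_in V E (V - X) K" "(V - K, K \<union> X) \<in> \<tau>"
      using X by blast
    then have "P {C\<in>\<C>. C \<subseteq> (K \<union> X) - (V - K)}" unfolding \<tau>_def by auto
    then have "infinite {C\<in>\<C>. C \<subseteq> (K \<union> X) - (V - K)}" using u1 by blast
    moreover have "{C\<in>\<C>. C \<subseteq> (K \<union> X) - (V - K)} \<subseteq> {K}"
    proof
      fix C assume C: "C \<in> {C\<in>\<C>. C \<subseteq> (K \<union> X) - (V - K)}"
      then obtain y where y: "y \<in> C" using cne by blast
      then have "y \<in> K" using C X(1) by blast
      then have "C = K" using comp_eq[OF G, of "V - X" C K y] comps C y K(1) by blast
      then show "C \<in> {K}" by simp
    qed
    ultimately show False using finite_subset by blast
  qed
  show ?thesis using orient cons avoid sigt np unfolding F_tangle_def by blast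
qed


lemma is_sep_D:
  assumes "is_sep V E s"
  shows "fst s \<subseteq> V" "snd s \<subseteq> V" "fst s \<union> snd s = V"
    "\<And>u v. u \<in> fst s - snd s \<Longrightarrow> v \<in> snd s - fst s \<Longrightarrow> \<not> E u v"
  using assms by (cases s; simp add: is_sep_def)+

lemma comp_extend:
  assumes C: "component_in V E S C" and N: "nbhd V E C = X" and SX: "S \<inter> X = {}"
  shows "component_in V E (V - X) C"
proof -
  from C obtain x where x: "x \<in> S \<inter> V"
    and C': "C = {y. (\<lambda>u v. E u v \<and> u \<in> S \<inter> V \<and> v \<in> S \<inter> V)\<^sup>*\<^sup>* x y}"
    unfolding component_in_def by blast
  let ?R = "\<lambda>u v. E u v \<and> u \<in> (V - X) \<inter> V \<and> v \<in> (V - X) \<inter> V"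
  have "C = {y. ?R\<^sup>*\<^sup>* x y}"
  proof (intro set_eqI iffI)
    fix y assume "y \<in> C"
    then have "(\<lambda>u v. E u v \<and> u \<in> S \<inter> V \<and> v \<in> S \<inter> V)\<^sup>*\<^sup>* x y" using C' by simp
    then show "y \<in> {y. ?R\<^sup>*\<^sup>* x y}"
    proof (induction rule: rtranclp_induct)
      case base then show ?case by simp
    next
      case (step y z)
      then have "?R y z" using SX by blast
      then show ?case using step by (simp add: rtranclp.rtrancl_into_rtrancl)
    qed
  next
    fix y assume "y \<in> {y. ?R\<^sup>*\<^sup>* x y}"
    then have "?R\<^sup>*\<^sup>* x y" by simp
    then show "y \<in> C"
    proof (induction rule: rtranclp_induct)
      case base then show ?case using C' by simp
    next
      case (step y z)
      show ?case
      proof (rule ccontr)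
        assume "z \<notin> C"
        then have "z \<in> nbhd V E C" using step unfolding nbhd_def by blast
        then show False using N step by blast
      qed
    qed
  qed
  moreover have "x \<in> (V - X) \<inter> V" using x SX by blast
  ultimately show ?thesis unfolding component_in_def by blast
qed

lemma case2:
  assumes G: "graph V E" and sig: "\<sigma> \<subseteq> vS V E k" "is_star V E \<sigma>" "\<forall>s \<in> \<sigma>. left_tight V E s"
    and inf: "infinite {s \<in> \<sigma>. fst s \<inter> snd s = X}"
  shows "\<exists>\<C>. infinite \<C> \<and> (\<forall>C\<in>\<C>. component_in V E (V - X) C)
           \<and> (\<forall>s\<in>\<sigma>. finite {C\<in>\<C>. \<not> C \<subseteq> snd s - fst s})"
proof -
  let ?S = "{s \<in> \<sigma>. fst s \<inter> snd s = X}"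
  have star: "fst s \<subseteq> snd t" if "s \<in> \<sigma>" "t \<in> \<sigma>" "s \<noteq> t" for s t
    using sig(2) that unfolding is_star_def sep_le_def flip_def by auto
  define c where "c s = (SOME C. component_in V E (fst s - snd s) C \<and> nbhd V E C = fst s \<inter> snd s)" for s
  have c: "component_in V E (fst s - snd s) (c s) \<and> nbhd V E (c s) = fst s \<inter> snd s" if "s \<in> \<sigma>" for s
  proof -
    have "\<exists>C. component_in V E (fst s - snd s) C \<and> nbhd V E C = fst s \<inter> snd s"
      using sig(3) that unfolding left_tight_def by blast
    then show ?thesis unfolding c_def by (rule someI_ex)
  qed
  have csub: "c s \<subseteq> fst s - snd s" "c s \<noteq> {}" if "s \<in> \<sigma>" for s
    using comp_props[of V E "fst s - snd s" "c s"] c[OF that] by auto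
  have ccomp: "component_in V E (V - X) (c s)" if "s \<in> ?S" for s
  proof -
    have "s \<in> \<sigma>" "fst s \<inter> snd s = X" using that by auto
    then show ?thesis using comp_extend[of V E "fst s - snd s" "c s" X] c by blast
  qed
  have "inj_on c ?S"
  proof (rule inj_onI)
    fix s t assume st: "s \<in> ?S" "t \<in> ?S" "c s = c t"
    show "s = t"
    proof (rule ccontr)
      assume "s \<noteq> t"
      then have "fst s \<subseteq> snd t" using star st by blast
      moreover obtain y where "y \<in> c s" using csub st by blast
      ultimately show False using csub[of s] csub[of t] st by blast
    qed
  qed
  then have "infinite (c ` ?S)" using inf finite_imageD by blast
  moreover have "\<forall>C\<in>c ` ?S. component_in V E (V - X) C" using ccomp by blast
  moreover have "\<forall>s\<in>\<sigma>. finite {C\<in>c ` ?S. \<not> C \<subseteq> snd s - fst s}"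
  proof
    fix s assume s: "s \<in> \<sigma>"
    have "{C\<in>c ` ?S. \<not> C \<subseteq> snd s - fst s} \<subseteq> {c s}"
    proof
      fix C assume C: "C \<in> {C\<in>c ` ?S. \<not> C \<subseteq> snd s - fst s}"
      then obtain t where t: "t \<in> ?S" "C = c t" by blast
      show "C \<in> {c s}"
      proof (cases "t = s")
        case True then show ?thesis using t by simp
      next
        case False
        then have "fst t \<subseteq> snd s" "fst s \<subseteq> snd t" using star s t by auto
        then have "c t \<subseteq> snd s - fst s" using csub[of t] t by blast
        then show ?thesis using C t by blast
      qed
    qed
    then show "finite {C\<in>c ` ?S. \<not> C \<subseteq> snd s - fst s}" using finite_subset by blast
  qed
  ultimately show ?thesis by blast
qed



lemma torso_graph: "graph V E \<Longrightarrow> graph (interior V \<sigma>) (torso_edges V E \<sigma>)"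
  unfolding graph_def torso_edges_def by blast

lemma torso_path:
  assumes G: "graph V E" and sepS: "\<forall>s\<in>\<sigma>. is_sep V E s"
    and star: "\<And>s t. s \<in> \<sigma> \<Longrightarrow> t \<in> \<sigma> \<Longrightarrow> s \<noteq> t \<Longrightarrow> fst s \<subseteq> snd t"
    and u: "u \<in> interior V \<sigma> - X"
    and path: "(\<lambda>a b. E a b \<and> a \<in> (V - X) \<inter> V \<and> b \<in> (V - X) \<inter> V)\<^sup>*\<^sup>* u v"
  shows "(v \<in> interior V \<sigma> \<and> (\<lambda>a b. torso_edges V E \<sigma> a b \<and> a \<in> (interior V \<sigma> - X) \<inter> interior V \<sigma>
             \<and> b \<in> (interior V \<sigma> - X) \<inter> interior V \<sigma>)\<^sup>*\<^sup>* u v)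
       \<or> (\<exists>s\<in>\<sigma>. v \<in> fst s - snd s \<and> (\<exists>w\<in>fst s \<inter> snd s - X.
             (\<lambda>a b. torso_edges V E \<sigma> a b \<and> a \<in> (interior V \<sigma> - X) \<inter> interior V \<sigma>
             \<and> b \<in> (interior V \<sigma> - X) \<inter> interior V \<sigma>)\<^sup>*\<^sup>* u w))"
  using path
proof (induction rule: rtranclp_induct)
  let ?W = "interior V \<sigma>"
  let ?Rt = "\<lambda>a b. torso_edges V E \<sigma> a b \<and> a \<in> (interior V \<sigma> - X) \<inter> interior V \<sigma>
             \<and> b \<in> (interior V \<sigma> - X) \<inter> interior V \<sigma>"
  case base then show ?case using u by simp
next
  let ?W = "interior V \<sigma>"
  let ?Rt = "\<lambda>a b. torso_edges V E \<sigma> a b \<and> a \<in> (interior V \<sigma> - X) \<inter> interior V \<sigma>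
             \<and> b \<in> (interior V \<sigma> - X) \<inter> interior V \<sigma>"
  have inW: "a \<in> ?W \<longleftrightarrow> a \<in> V \<and> (\<forall>s\<in>\<sigma>. a \<in> snd s)" for a
    unfolding interior_def by blast
  have sepW: "fst s \<inter> snd s \<subseteq> ?W" if "s \<in> \<sigma>" for s
  proof
    fix a assume a: "a \<in> fst s \<inter> snd s"
    have "a \<in> V" using a is_sep_D(1)[of V E s] sepS that by blast
    moreover have "a \<in> snd t" if "t \<in> \<sigma>" for t
      using star[of s t] \<open>s \<in> \<sigma>\<close> that a by (cases "s = t") auto
    ultimately show "a \<in> ?W" using inW by blast
  qed
  have edgeE: "?Rt a b" if "a \<in> ?W - X" "b \<in> ?W - X" "E a b" for a b
    using that unfolding torso_edges_def by blast
  have edgeS: "?Rt a b" if "a \<in> ?W - X" "b \<in> ?W - X" "a \<noteq> b" "s \<in> \<sigma>"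
     "a \<in> fst s \<inter> snd s" "b \<in> fst s \<inter> snd s" for a b s
    using that unfolding torso_edges_def by blast
  case (step y z)
  have Eyz: "E y z" "y \<in> V - X" "z \<in> V - X" using step(2) by auto
  from step(3) show ?case
  proof
    assume A: "y \<in> ?W \<and> ?Rt\<^sup>*\<^sup>* u y"
    show ?case
    proof (cases "z \<in> ?W")
      case True
      then have "?Rt y z" using edgeE A Eyz by blast
      then have "?Rt\<^sup>*\<^sup>* u z" using A rtranclp.rtrancl_into_rtrancl[of ?Rt u y z] by blast
      then show ?thesis using True by blast
    next
      case False
      then obtain s where s: "s \<in> \<sigma>" "z \<notin> snd s" using inW Eyz by blast
      have sp: "fst s \<union> snd s = V" "\<And>u v. u \<in> fst s - snd s \<Longrightarrow> v \<in> snd s - fst s \<Longrightarrow> \<not> E u v"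
        using is_sep_D[of V E s] sepS s by auto
      have zA: "z \<in> fst s - snd s" using sp(1) s Eyz by blast
      have yB: "y \<in> snd s" using A inW s by blast
      have "y \<in> fst s" using sp(2)[OF zA] yB graph_sym[OF G Eyz(1)] by blast
      then show ?thesis using zA yB s A Eyz by blast
    qed
  next
    assume "\<exists>s\<in>\<sigma>. y \<in> fst s - snd s \<and> (\<exists>w\<in>fst s \<inter> snd s - X. ?Rt\<^sup>*\<^sup>* u w)"
    then obtain s w where s: "s \<in> \<sigma>" "y \<in> fst s - snd s" "w \<in> fst s \<inter> snd s - X" "?Rt\<^sup>*\<^sup>* u w"
      by blast
    have sp: "fst s \<union> snd s = V" "\<And>u v. u \<in> fst s - snd s \<Longrightarrow> v \<in> snd s - fst s \<Longrightarrow> \<not> E u v"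
      using is_sep_D[of V E s] sepS s by auto
    show ?case
    proof (cases "z \<in> fst s - snd s")
      case True then show ?thesis using s by blast
    next
      case False
      then have zB: "z \<in> snd s" using sp(1) Eyz by blast
      have "z \<notin> snd s - fst s" using sp(2)[OF s(2)] Eyz(1) by blast
      then have zAB: "z \<in> fst s \<inter> snd s" using zB by blast
      then have zW: "z \<in> ?W - X" using sepW[OF s(1)] Eyz by blast
      have wW: "w \<in> ?W - X" using sepW[OF s(1)] s(3) by blast
      have "?Rt\<^sup>*\<^sup>* u z"
      proof (cases "w = z")
        case True then show ?thesis using s(4) by simp
      next
        case False
        then have "?Rt w z" using edgeS[OF wW zW False s(1)] s(3) zAB by blast
        then show ?thesis using s(4) rtranclp.rtrancl_into_rtrancl[of ?Rt u w z] by blast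
      qed
      then show ?thesis using zW by blast
    qed
  qed
qed


lemma case1:
  assumes G: "graph V E" and sig: "\<sigma> \<subseteq> vS V E k" "is_star V E \<sigma>"
    and X: "X \<subseteq> interior V \<sigma>"
    and crit: "critical (interior V \<sigma>) (torso_edges V E \<sigma>) X"
  shows "\<exists>\<C>. infinite \<C> \<and> (\<forall>C\<in>\<C>. component_in V E (V - X) C)
           \<and> (\<forall>s\<in>\<sigma>. finite {C\<in>\<C>. \<not> C \<subseteq> snd s - fst s})"
proof -
  let ?W = "interior V \<sigma>"
  let ?H = "torso_edges V E \<sigma>"
  let ?K = "{K. component_in ?W ?H (?W - X) K \<and> nbhd ?W ?H K = X}"
  let ?R = "\<lambda>a b. E a b \<and> a \<in> (V - X) \<inter> V \<and> b \<in> (V - X) \<inter> V"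
  let ?Rt = "\<lambda>a b. torso_edges V E \<sigma> a b \<and> a \<in> (interior V \<sigma> - X) \<inter> interior V \<sigma>
             \<and> b \<in> (interior V \<sigma> - X) \<inter> interior V \<sigma>"
  have Kinf: "infinite ?K" using crit unfolding critical_def by blast
  have sepS: "\<forall>s\<in>\<sigma>. is_sep V E s" using sig(1) unfolding vS_def by auto
  have star: "fst s \<subseteq> snd t" if "s \<in> \<sigma>" "t \<in> \<sigma>" "s \<noteq> t" for s t
    using sig(2) that unfolding is_star_def sep_le_def flip_def by auto
  have WV: "?W \<subseteq> V" unfolding interior_def by blast
  have Wsnd: "?W \<subseteq> snd s" if "s \<in> \<sigma>" for s using that unfolding interior_def by blast
  define p where "p K = (SOME x. x \<in> K)" for K :: "'a set"
  have pK: "p K \<in> K" "K \<subseteq> (?W - X) \<inter> ?W" if "K \<in> ?K" for K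
  proof -
    have "K \<subseteq> (?W - X) \<inter> ?W" "K \<noteq> {}" using comp_props[of ?W ?H "?W - X" K] that by auto
    then show "p K \<in> K" "K \<subseteq> (?W - X) \<inter> ?W" unfolding p_def by (auto simp: some_in_eq)
  qed
  define c where "c K = {y. ?R\<^sup>*\<^sup>* (p K) y}" for K
  have pV: "p K \<in> (V - X) \<inter> V" if "K \<in> ?K" for K using pK[OF that] WV by blast
  have ccomp: "component_in V E (V - X) (c K)" if "K \<in> ?K" for K
    unfolding component_in_def c_def using pV[OF that] by blast
  have pc: "p K \<in> c K" for K unfolding c_def by simp
  have "inj_on c ?K"
  proof (rule inj_onI)
    fix K1 K2 assume K: "K1 \<in> ?K" "K2 \<in> ?K" "c K1 = c K2"
    have "p K2 \<in> c K1" using pc[of K2] K(3) by simp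
    then have "?R\<^sup>*\<^sup>* (p K1) (p K2)" unfolding c_def by simp
    moreover have "p K1 \<in> ?W - X" using pK[OF K(1)] by blast
    ultimately have disj: "(p K2 \<in> ?W \<and> ?Rt\<^sup>*\<^sup>* (p K1) (p K2))
       \<or> (\<exists>s\<in>\<sigma>. p K2 \<in> fst s - snd s \<and> (\<exists>w\<in>fst s \<inter> snd s - X. ?Rt\<^sup>*\<^sup>* (p K1) w))"
      using torso_path[OF G sepS star] by blast
    have p2W: "p K2 \<in> ?W" using pK[OF K(2)] by blast
    have "?Rt\<^sup>*\<^sup>* (p K1) (p K2)" using disj p2W Wsnd by blast
    moreover obtain x0 where K1': "K1 = {y. ?Rt\<^sup>*\<^sup>* x0 y}"
      using K(1) unfolding component_in_def by blast
    moreover have "?Rt\<^sup>*\<^sup>* x0 (p K1)" using pK(1)[OF K(1)] K1' by blast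
    ultimately have "p K2 \<in> K1" using rtranclp_trans[of ?Rt x0 "p K1" "p K2"] by blast
    moreover have "component_in ?W ?H (?W - X) K1" "component_in ?W ?H (?W - X) K2" using K by auto
    ultimately show "K1 = K2" using comp_eq[OF torso_graph[OF G]] pK(1)[OF K(2)] by blast
  qed
  then have "infinite (c ` ?K)" using Kinf finite_imageD by blast
  moreover have comps: "\<forall>C\<in>c ` ?K. component_in V E (V - X) C" using ccomp by blast
  moreover have "\<forall>s\<in>\<sigma>. finite {C\<in>c ` ?K. \<not> C \<subseteq> snd s - fst s}"
  proof
    fix s assume s: "s \<in> \<sigma>"
    obtain A B where AB: "s = (A, B)" by fastforce
    have sep: "is_sep V E (A, B)" "finite (A \<inter> B)" using sig(1) s unfolding AB vS_def by auto
    have "{C\<in>c ` ?K. \<not> C \<subseteq> snd s - fst s} \<subseteq> {C\<in>c ` ?K. C \<inter> (A \<inter> B) \<noteq> {}}"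
    proof
      fix C assume C: "C \<in> {C\<in>c ` ?K. \<not> C \<subseteq> snd s - fst s}"
      then obtain K where K: "K \<in> ?K" "C = c K" by blast
      have "p K \<in> B" using pK[OF K(1)] Wsnd[OF s] AB by auto
      moreover have "p K \<in> C" using pc K by simp
      moreover have "C \<subseteq> A - B \<or> C \<subseteq> B - A \<or> C \<inter> (A \<inter> B) \<noteq> {}"
        using comp_side[OF G ccomp[OF K(1)] sep(1)] K by blast
      ultimately show "C \<in> {C\<in>c ` ?K. C \<inter> (A \<inter> B) \<noteq> {}}" using C AB by auto
    qed
    moreover have "finite {C\<in>c ` ?K. C \<inter> (A \<inter> B) \<noteq> {}}"
      using finite_meeting[OF G comps sep(2)] .
    ultimately show "finite {C\<in>c ` ?K. \<not> C \<subseteq> snd s - fst s}" using finite_subset by blast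
  qed
  ultimately show ?thesis by blast
qed

theorem lemma3p8:
  fixes V :: "'a set" and E :: "'a \<Rightarrow> 'a \<Rightarrow> bool" and k :: nat
    and \<F> :: "('a set \<times> 'a set) set set" and \<sigma> :: "('a set \<times> 'a set) set" and X :: "'a set"
  assumes G: "graph V E"
    and F: "\<forall>\<rho> \<in> \<F>. finite \<rho> \<and> \<rho> \<subseteq> vS V E k \<and> is_star V E \<rho> \<and> finite (interior V \<rho>)"
    and sig: "\<sigma> \<subseteq> vS V E k" "is_star V E \<sigma>" "\<forall>s \<in> \<sigma>. left_tight V E s"
    and X: "X \<subseteq> interior V \<sigma>" "finite X" "card X < k"
    and crit: "critical (interior V \<sigma>) (torso_edges V E \<sigma>) X
               \<or> infinite {s \<in> \<sigma>. fst s \<inter> snd s = X}"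
  shows "\<exists>\<tau>. F_tangle V E k \<F> \<tau> \<and> \<not> principal V E k \<tau> \<and> \<sigma> \<subseteq> \<tau>"
proof -
  have F': "\<forall>\<rho> \<in> \<F>. finite \<rho> \<and> finite (interior V \<rho>)" using F by blast
  have XV: "X \<subseteq> V" using X(1) unfolding interior_def by blast
  obtain \<C> where C: "infinite \<C>" "\<forall>C\<in>\<C>. component_in V E (V - X) C"
    "\<forall>s\<in>\<sigma>. finite {C\<in>\<C>. \<not> C \<subseteq> snd s - fst s}"
    using crit case1[OF G sig(1,2) X(1)] case2[OF G sig] by blast
  show ?thesis using core[OF G F' sig(1) XV X(2,3) C] .
qed

end
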